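(* Let $\mathcal O$ be the suboperad of $\mathrm{CNCB}$ generated by $p:=T_{bbu}$ and $r:=T_{ubu}$. Then $\mathcal O$ admits the presentation with generators $p,r$ of arity $2$ and relations $$r\circ_1 r=r\circ_2 r,\qquad r\circ_1 p=p\circ_2 r.$$ That is, $\mathcal O$ is isomorphic, via the morphism sending the generators to $p$ and $r$, to the quotient of the free operad on two binary generators by the operadic congruence generated by these relations.
   Context: For $n\ge2$, a bicoloured noncrossing configuration (BNC) of size $n$ is a regular polygon with vertices $1,\dots,n+1$ clockwise, together with disjoint sets of blue and red arcs among the arcs $(i,j)$, $1\le i<j\le n+1$. The arcs $(i,i+1)$ are the edges ($i$th edge), $(1,n+1)$ is the base, and the others are diagonals. Coloured arcs are pairwise noncrossing ($(i,j),(k,l)$ cross iff $i<k<j<l$ or $k<i<l<j$), and red arcs are diagonals. There is one BNC of size $1$, a blue segment, which is the unit. The operad $\mathrm{CNCB}$ has the BNCs as elements (arity = size). Its composition $\mathfrak C\circ_i\mathfrak D$ ($\mathfrak C$ of size $n$, $\mathfrak D$ of size $m$) glues the base of $\mathfrak D$ on the $i$th edge of $\mathfrak C$. Arcs $(a,b)$ of $\mathfrak C$ become $(\sigma(a),\sigma(b))$ with $\sigma(v)=v$ for $v\le i$ and $v+m-1$ otherwise, and arcs $(a,b)$ of $\mathfrak D$ become $(a+i-1,b+i-1)$, keeping colours. The exception is the arc $(i,i+m)$, which is red if the $i$th edge of $\mathfrak C$ and the base of $\mathfrak D$ are both uncoloured, blue if both are blue, and uncoloured otherwise. For $x,y,z\in\{b,u\}$,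 $T_{xyz}$ denotes the BNC of size $2$ (a triangle with vertices $1,2,3$) whose first edge $(1,2)$ has colour $x$, whose base $(1,3)$ has colour $y$, and whose second edge $(2,3)$ has colour $z$, where $b$ = blue and $u$ = uncoloured. The suboperad generated by a set is the smallest suboperad containing it. *)

theory Defs
  imports Main
begin

text \<open>A BNC is represented as a triple (n, B, R): its size n, its set of blue arcs B
and its set of red arcs R; arcs are pairs (i,j) with 1 <= i < j <= n+1 (vertices 1..n+1).\<close>

type_synonym arc = "nat \<times> nat"
type_synonym bnc = "nat \<times> arc set \<times> arc set"

definition bnc_size :: "bnc \<Rightarrow> nat" where
  "bnc_size C = fst C"

definition bnc_blue :: "bnc \<Rightarrow> arc set" where
  "bnc_blue C = fst (snd C)"

definition bnc_red :: "bnc \<Rightarrow> arc set" where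
  "bnc_red C = snd (snd C)"

definition arcs_cross :: "arc \<Rightarrow> arc \<Rightarrow> bool" where
  "arcs_cross a b = (let (i,j) = a; (k,l) = b in (i < k \<and> k < j \<and> j < l) \<or> (k < i \<and> i < l \<and> l < j))"

text \<open>Well-formedness (for reference; every element generated below is well-formed).\<close>
definition bnc_wf :: "bnc \<Rightarrow> bool" where
  "bnc_wf C = (let n = bnc_size C; B = bnc_blue C; R = bnc_red C in
     n \<ge> 1 \<and> B \<inter> R = {} \<and>
     (\<forall>(i,j) \<in> B \<union> R. 1 \<le> i \<and> i < j \<and> j \<le> n + 1) \<and>
     (\<forall>a \<in> B \<union> R. \<forall>b \<in> B \<union> R. \<not> arcs_cross a b) \<and>
     (\<forall>(i,j) \<in> R. j \<noteq> i + 1 \<and> (i,j) \<noteq> (1, n + 1)) \<and>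
     (n = 1 \<longrightarrow> B = {(1,2)} \<and> R = {}))"

definition bnc_unit :: bnc where
  "bnc_unit = (1, {(1,2)}, {})"

text \<open>Partial composition C o_i D of CNCB (meaningful for 1 <= i <= size C).\<close>
definition bnc_comp :: "bnc \<Rightarrow> nat \<Rightarrow> bnc \<Rightarrow> bnc" where
  "bnc_comp C i D =
    (let n = bnc_size C; m = bnc_size D;
         \<sigma> = (\<lambda>v. if v \<le> i then v else v + m - 1);
         relC = (\<lambda>(a,b). (\<sigma> a, \<sigma> b));
         sh = (\<lambda>(a,b). (a + i - 1, b + i - 1));
         e = (i, i + m);
         edge_blue = ((i, i+1) \<in> bnc_blue C);
         edge_unc = ((i, i+1) \<notin> bnc_blue C \<and> (i, i+1) \<notin> bnc_red C);
         base_blue = ((1, m+1) \<in> bnc_blue D);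
         base_unc = ((1, m+1) \<notin> bnc_blue D \<and> (1, m+1) \<notin> bnc_red D);
         B = (relC ` bnc_blue C \<union> sh ` bnc_blue D) - {e};
         R = (relC ` bnc_red C \<union> sh ` bnc_red D) - {e}
     in (n + m - 1,
         B \<union> (if edge_blue \<and> base_blue then {e} else {}),
         R \<union> (if edge_unc \<and> base_unc then {e} else {})))"

text \<open>Triangles T_xyz: first edge (1,2) colour x, base (1,3) colour y, second edge (2,3) colour z.\<close>
definition T_bbu :: bnc where
  "T_bbu = (2, {(1,2), (1,3)}, {})"

definition T_ubu :: bnc where
  "T_ubu = (2, {(1,3)}, {})"

inductive_set suboperad_gen :: "bnc set \<Rightarrow> bnc set" for G :: "bnc set" where
  unit: "bnc_unit \<in> suboperad_gen G"
| gen: "g \<in> G \<Longrightarrow> g \<in> suboperad_gen G"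
| comp: "x \<in> suboperad_gen G \<Longrightarrow> y \<in> suboperad_gen G \<Longrightarrow> 1 \<le> i \<Longrightarrow> i \<le> bnc_size x
          \<Longrightarrow> bnc_comp x i y \<in> suboperad_gen G"

datatype gen2 = GP | GR

text \<open>Elements of the free operad: planar binary trees with internal nodes labelled by generators;
leaves are the inputs, numbered from left to right.\<close>
datatype ftree = Leaf | Node gen2 ftree ftree

fun farity :: "ftree \<Rightarrow> nat" where
  "farity Leaf = 1"
| "farity (Node g l r) = farity l + farity r"

fun fcomp :: "ftree \<Rightarrow> nat \<Rightarrow> ftree \<Rightarrow> ftree" where
  "fcomp Leaf i s = s"
| "fcomp (Node g l r) i s =
     (if i \<le> farity l then Node g (fcomp l i s) r else Node g l (fcomp r (i - farity l) s))"

abbreviation fgen :: "gen2 \<Rightarrow> ftree" where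
  "fgen g \<equiv> Node g Leaf Leaf"

inductive fcong :: "ftree \<Rightarrow> ftree \<Rightarrow> bool" where
  rel_rr: "fcong (fcomp (fgen GR) 1 (fgen GR)) (fcomp (fgen GR) 2 (fgen GR))"
| rel_rp: "fcong (fcomp (fgen GR) 1 (fgen GP)) (fcomp (fgen GP) 2 (fgen GR))"
| refl: "fcong t t"
| sym: "fcong t t' \<Longrightarrow> fcong t' t"
| trans: "fcong t t' \<Longrightarrow> fcong t' t'' \<Longrightarrow> fcong t t''"
| comp_left: "fcong t t' \<Longrightarrow> 1 \<le> i \<Longrightarrow> i \<le> farity t \<Longrightarrow> fcong (fcomp t i s) (fcomp t' i s)"
| comp_right: "fcong s s' \<Longrightarrow> 1 \<le> i \<Longrightarrow> i \<le> farity t \<Longrightarrow> fcong (fcomp t i s) (fcomp t i s')"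

text \<open>The operad morphism from the free operad to CNCB sending GP to p = T_bbu and GR to r = T_ubu
(uniquely determined: a node g(l,r) is (g o_2 r) o_1 l).\<close>
fun gen_val :: "gen2 \<Rightarrow> bnc" where
  "gen_val GP = T_bbu"
| "gen_val GR = T_ubu"

fun feval :: "ftree \<Rightarrow> bnc" where
  "feval Leaf = bnc_unit"
| "feval (Node g l r) = bnc_comp (bnc_comp (gen_val g) 2 (feval r)) 1 (feval l)"

end

theory Submission imports Defs begin

fun A :: "ftree \<Rightarrow> nat \<Rightarrow> arc set" where
  "A Leaf s = {}"
| "A (Node GP a b) s = insert (s, s + farity a) (A a s \<union> A b (s + farity a))"
| "A (Node GR a b) s = A a s \<union> A b (s + farity a)"

definition F :: "ftree \<Rightarrow> bnc" where
  "F t = (farity t, insert (1, farity t + 1) (A t 1), {})"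

lemma farity_pos: "1 \<le> farity t"
  by (induction t) auto

lemma A_bounds: "(x,y) \<in> A t s \<Longrightarrow> s \<le> x \<and> x < y \<and> y < s + farity t"
proof (induction t arbitrary: s x y)
  case Leaf then show ?case by simp
next
  case (Node g l r)
  have l1: "1 \<le> farity l" "1 \<le> farity r" by (rule farity_pos)+
  show ?case
  proof (cases g)
    case GP then show ?thesis using Node l1 by (fastforce)
  next
    case GR then show ?thesis using Node l1 by (fastforce)
  qed
qed

lemma A_shift: "map_prod (\<lambda>v. v + d) (\<lambda>v. v + d) ` A t s = A t (s + d)"
proof (induction t arbitrary: s)
  case Leaf then show ?case by simp
next
  case (Node g l r)
  then show ?case by (cases g) (simp_all add: image_Un add.commute add.left_commute)
qed

lemma farity_fcomp: "1 \<le> i \<Longrightarrow> i \<le> farity t \<Longrightarrow> farity (fcomp t i u) = farity t + farity u - 1"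
proof (induction t arbitrary: i)
  case Leaf then show ?case by simp
next
  case (Node g l r)
  have "1 \<le> farity l" "1 \<le> farity r" "1 \<le> farity u" by (rule farity_pos)+
  then show ?case using Node by auto
qed


definition sg :: "nat \<Rightarrow> nat \<Rightarrow> nat \<Rightarrow> nat" where
  "sg c m v = (if v \<le> c then v else v + m - 1)"

lemma A_fcomp: "1 \<le> i \<Longrightarrow> i \<le> farity t \<Longrightarrow>
  A (fcomp t i u) s = map_prod (sg (s+i-1) (farity u)) (sg (s+i-1) (farity u)) ` A t s \<union> A u (s+i-1)"
proof (induction t arbitrary: i s)
  case Leaf then show ?case by simp
next
  case (Node g l r)
  have p: "1 \<le> farity l" "1 \<le> farity r" "1 \<le> farity u" by (rule farity_pos)+
  let ?f = "sg (s+i-1) (farity u)"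
  show ?case
  proof (cases "i \<le> farity l")
    case True
    have ih: "A (fcomp l i u) s = map_prod ?f ?f ` A l s \<union> A u (s+i-1)"
      using Node.IH(1)[of i s] Node.prems True by simp
    have fa: "farity (fcomp l i u) = farity l + farity u - 1" using farity_fcomp Node.prems True by simp
    have r: "map_prod ?f ?f ` A r (s + farity l) = A r (s + farity l + (farity u - 1))"
    proof -
      have "map_prod ?f ?f ` A r (s + farity l) = map_prod (\<lambda>v. v + (farity u - 1)) (\<lambda>v. v + (farity u - 1)) ` A r (s + farity l)"
      proof (rule image_cong[OF HOL.refl])
        fix z assume "z \<in> A r (s + farity l)"
        then obtain x y where z: "z = (x,y)" "(x,y) \<in> A r (s + farity l)" by (cases z) auto
        then show "map_prod ?f ?f z = map_prod (\<lambda>v. v + (farity u - 1)) (\<lambda>v. v + (farity u - 1)) z"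
          using A_bounds[OF z(2)] True p by (auto simp: sg_def)
      qed
      then show ?thesis by (simp add: A_shift)
    qed
    have sv: "?f s = s" "?f (s + farity l) = s + farity l + farity u - 1"
      using True p Node.prems by (auto simp: sg_def)
    have e: "s + farity l + (farity u - 1) = s + (farity l + farity u - 1)" using p by simp
    show ?thesis using True ih fa r sv e p
      by (cases g) (auto simp: image_Un)
  next
    case False
    have ih: "A (fcomp r (i - farity l) u) (s + farity l) = map_prod ?f ?f ` A r (s + farity l) \<union> A u (s+i-1)"
      using Node.IH(2)[of "i - farity l" "s + farity l"] Node.prems False p by simp
    have l: "map_prod ?f ?f ` A l s = A l s"
    proof -
      have "map_prod ?f ?f ` A l s = id ` A l s"
      proof (rule image_cong[OF HOL.refl])
        fix z assume "z \<in> A l s"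
        then obtain x y where z: "z = (x,y)" "(x,y) \<in> A l s" by (cases z) auto
        then show "map_prod ?f ?f z = id z"
          using A_bounds[OF z(2)] False p by (auto simp: sg_def)
      qed
      then show ?thesis by simp
    qed
    have sv: "?f s = s" "?f (s + farity l) = s + farity l"
      using False p Node.prems by (auto simp: sg_def)
    show ?thesis using False ih l sv p
      by (cases g) (auto simp: image_Un)
  qed
qed


lemma comp_gen:
  assumes "(1, m+1) \<in> BD"
  shows "bnc_comp (n, BC, {}) i (m, BD, {}) =
    (n+m-1, (map_prod (sg i m) (sg i m) ` BC \<union> map_prod (\<lambda>v. v + i - 1) (\<lambda>v. v + i - 1) ` BD - {(i,i+m)})
       \<union> (if (i,i+1)\<in>BC then {(i,i+m)} else {}), {})"
  using assms
  by (simp add: bnc_comp_def Let_def bnc_size_def bnc_blue_def bnc_red_def sg_def map_prod_def)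

lemma comp_F: assumes "1 \<le> i" "i \<le> farity t" shows "bnc_comp (F t) i (F u) = F (fcomp t i u)"
proof (cases t)
  case Leaf
  then have i: "i = 1" using assms by simp
  show ?thesis using Leaf i
    by (simp add: F_def comp_gen sg_def insert_absorb)
next
  case (Node g l r)
  define n where "n = farity t"
  define m where "m = farity u"
  have n2: "n \<ge> 2" using Node farity_pos[of l] farity_pos[of r] by (simp add: n_def)
  have m1: "m \<ge> 1" using farity_pos[of u] by (simp add: m_def)
  let ?rel = "map_prod (sg i m) (sg i m)"
  have Ft: "F t = (n, insert (1, n+1) (A t 1), {})" by (simp add: F_def n_def)
  have Fu: "F u = (m, insert (1, m+1) (A u 1), {})" by (simp add: F_def m_def)
  have fa: "farity (fcomp t i u) = n + m - 1" using farity_fcomp assms by (simp add: n_def m_def)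
  have Af: "A (fcomp t i u) 1 = ?rel ` A t 1 \<union> A u i"
    using A_fcomp[OF assms, of u 1] by (simp add: m_def)
  have r1: "?rel ` insert (1, n+1) (A t 1) = insert (1, n+m) (?rel ` A t 1)"
    using assms n2 m1 by (simp add: sg_def n_def)
  have fe: "(\<lambda>v::nat. v + i - 1) = (\<lambda>v. v + (i-1))" using assms by auto
  have sh: "map_prod (\<lambda>v. v + i - 1) (\<lambda>v. v + i - 1) ` insert (1, m+1) (A u 1) = insert (i, i+m) (A u i)"
    unfolding fe using A_shift[of "i-1" u 1] assms by (simp add: add.commute)
  have eu: "(i, i+m) \<notin> A u i" using A_bounds[of i "i+m" u i] by (auto simp: m_def)
  have ne: "(i, i+m) \<noteq> (1, n+m)" using n2 assms by (auto simp: n_def)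
  have edge: "((i,i+1) \<in> insert (1, n+1) (A t 1)) = ((i,i+1) \<in> A t 1)" using n2 by auto
  have er: "(i, i+m) \<in> ?rel ` A t 1 \<longleftrightarrow> (i,i+1) \<in> A t 1"
  proof
    assume "(i, i+m) \<in> ?rel ` A t 1"
    then obtain a b where ab: "(a,b) \<in> A t 1" "sg i m a = i" "sg i m b = i + m" by auto
    have "a < b" using A_bounds[OF ab(1)] by simp
    then have "a = i" "b = i + 1" using ab(2,3) m1 by (auto simp: sg_def split: if_splits)
    then show "(i,i+1) \<in> A t 1" using ab(1) by simp
  next
    assume "(i,i+1) \<in> A t 1"
    then have "?rel (i,i+1) \<in> ?rel ` A t 1" by blast
    then show "(i, i+m) \<in> ?rel ` A t 1" using m1 by (simp add: sg_def)
  qed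
  show ?thesis
    unfolding Ft Fu comp_gen[of m "insert (1, m+1) (A u 1)", OF insertI1] r1 sh edge
    using fa Af eu ne er n2 m1
    by (auto simp: F_def)
qed


lemma gen_F: "gen_val g = F (fgen g)"
  by (cases g) (auto simp: F_def T_bbu_def T_ubu_def)

lemma feval_F: "feval t = F t"
proof (induction t)
  case Leaf then show ?case by (simp add: F_def bnc_unit_def)
next
  case (Node g l r)
  have "bnc_comp (F (fgen g)) 2 (F r) = F (Node g Leaf r)"
    by (subst comp_F) auto
  moreover have "bnc_comp (F (Node g Leaf r)) 1 (F l) = F (Node g l r)"
    by (subst comp_F) (auto simp: farity_pos)
  ultimately show ?case using Node by (simp add: gen_F)
qed

lemma size_F: "bnc_size (F t) = farity t" by (simp add: F_def bnc_size_def)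

lemma range_part: "range feval = suboperad_gen {T_bbu, T_ubu}"
proof
  show "range feval \<subseteq> suboperad_gen {T_bbu, T_ubu}"
  proof
    fix x assume "x \<in> range feval"
    then obtain t where "x = feval t" by auto
    moreover have "feval t \<in> suboperad_gen {T_bbu, T_ubu}"
    proof (induction t)
      case Leaf then show ?case by (simp add: suboperad_gen.unit)
    next
      case (Node g l r)
      have g: "gen_val g \<in> suboperad_gen {T_bbu, T_ubu}"
        by (cases g) (auto intro: suboperad_gen.gen)
      have sg: "bnc_size (gen_val g) = 2" by (cases g) (auto simp: T_bbu_def T_ubu_def bnc_size_def)
      have c1: "bnc_comp (gen_val g) 2 (feval r) \<in> suboperad_gen {T_bbu, T_ubu}"
        by (rule suboperad_gen.comp[OF g Node(2)]) (auto simp: sg)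
      have "1 \<le> bnc_size (bnc_comp (gen_val g) 2 (feval r))"
        by (simp add: gen_F feval_F comp_F size_F farity_pos)
      then show ?case using suboperad_gen.comp[OF c1 Node(1)] by simp
    qed
    ultimately show "x \<in> suboperad_gen {T_bbu, T_ubu}" by simp
  qed
next
  show "suboperad_gen {T_bbu, T_ubu} \<subseteq> range feval"
  proof
    fix x assume "x \<in> suboperad_gen {T_bbu, T_ubu}"
    then show "x \<in> range feval"
    proof (induction rule: suboperad_gen.induct)
      case unit
      then show ?case by (metis feval.simps(1) rangeI)
    next
      case (gen g)
      then show ?case by (metis feval_F gen_F gen_val.simps empty_iff insert_iff rangeI)
    next
      case (comp x y i)
      then obtain t u where tu: "x = feval t" "y = feval u" by auto
      then have "i \<le> farity t" using comp by (simp add: feval_F size_F)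
      then have "bnc_comp x i y = feval (fcomp t i u)" using comp tu by (simp add: feval_F comp_F)
      then show ?case by simp
    qed
  qed
qed

lemma fcong_F: "fcong t t' \<Longrightarrow> F t = F t'"
proof (induction rule: fcong.induct)
  case rel_rr then show ?case by (simp add: F_def insert_commute)
next
  case rel_rp then show ?case by (simp add: F_def insert_commute)
next
  case (comp_left t t' i s)
  have "farity t = farity t'" using comp_left.IH by (simp add: F_def)
  then show ?case using comp_left comp_F[of i t s, symmetric] comp_F[of i t' s, symmetric] by simp
next
  case (comp_right s s' i t)
  then show ?case using comp_F[of i t s, symmetric] comp_F[of i t s', symmetric] by simp
qed auto


fun isR :: "ftree \<Rightarrow> bool" where
  "isR (Node GR a b) = True"
| "isR _ = False"

fun NF :: "ftree \<Rightarrow> bool" where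
  "NF Leaf = True"
| "NF (Node g a b) = (NF a \<and> NF b \<and> \<not> isR b)"

fun join :: "gen2 \<Rightarrow> ftree \<Rightarrow> ftree \<Rightarrow> ftree" where
  "join g x (Node GR y1 y2) = Node GR (join g x y1) y2"
| "join g x y = Node g x y"

fun nf :: "ftree \<Rightarrow> ftree" where
  "nf Leaf = Leaf"
| "nf (Node g a b) = join g (nf a) (nf b)"

lemma NF_join: "NF x \<Longrightarrow> NF y \<Longrightarrow> NF (join g x y)"
  by (induction g x y rule: join.induct) auto

lemma NF_nf: "NF (nf t)"
  by (induction t) (auto intro: NF_join)

lemma fcomp_node: "Node g a b = fcomp (fcomp (fgen g) 2 b) 1 a"
  by (simp add: farity_pos)

lemma cong_node: "fcong a a' \<Longrightarrow> fcong b b' \<Longrightarrow> fcong (Node g a b) (Node g a' b')"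
proof -
  assume a: "fcong a a'" and b: "fcong b b'"
  have 1: "fcong (Node g Leaf b) (Node g Leaf b')"
    using fcong.comp_right[OF b, of 2 "fgen g"] by simp
  have 2: "fcong (Node g a b) (Node g a b')"
    using fcong.comp_left[OF 1, of 1 a] by (simp add: farity_pos)
  have 3: "fcong (Node g a b') (Node g a' b')"
    using fcong.comp_right[OF a, of 1 "Node g Leaf b'"] by (simp add: farity_pos)
  show ?thesis using fcong.trans[OF 2 3] .
qed

lemma inst3: assumes "fcong X Y" "farity X = 3"
  shows "fcong (fcomp (fcomp (fcomp X 3 c) 2 b) 1 a) (fcomp (fcomp (fcomp Y 3 c) 2 b) 1 a)"
proof -
  have 1: "fcong (fcomp X 3 c) (fcomp Y 3 c)" using fcong.comp_left[OF assms(1)] assms(2) by simp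
  have f1: "farity (fcomp X 3 c) \<ge> 3" using farity_fcomp[of 3 X c] assms farity_pos[of c] by simp
  have 2: "fcong (fcomp (fcomp X 3 c) 2 b) (fcomp (fcomp Y 3 c) 2 b)" using fcong.comp_left[OF 1] f1 by simp
  have f2: "farity (fcomp (fcomp X 3 c) 2 b) \<ge> 1" by (rule farity_pos)
  show ?thesis using fcong.comp_left[OF 2] f2 by simp
qed

lemma assoc: "fcong (Node g a (Node GR b c)) (Node GR (Node g a b) c)"
proof (cases g)
  case GR
  have "fcong (fcomp (fcomp (fcomp (fcomp (fgen GR) 2 (fgen GR)) 3 c) 2 b) 1 a)
              (fcomp (fcomp (fcomp (fcomp (fgen GR) 1 (fgen GR)) 3 c) 2 b) 1 a)"
    by (rule inst3[OF fcong.sym[OF fcong.rel_rr]]) simp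
  then show ?thesis using GR by (simp add: farity_pos)
next
  case GP
  have "fcong (fcomp (fcomp (fcomp (fcomp (fgen GP) 2 (fgen GR)) 3 c) 2 b) 1 a)
              (fcomp (fcomp (fcomp (fcomp (fgen GR) 1 (fgen GP)) 3 c) 2 b) 1 a)"
    by (rule inst3[OF fcong.sym[OF fcong.rel_rp]]) simp
  then show ?thesis using GP by (simp add: farity_pos)
qed

lemma cong_join: "fcong (Node g x y) (join g x y)"
proof (induction g x y rule: join.induct)
  case (1 g x y1 y2)
  have "fcong (Node GR (Node g x y1) y2) (Node GR (join g x y1) y2)"
    using cong_node[OF 1 fcong.refl] .
  then show ?case using fcong.trans[OF assoc] by simp
qed (auto intro: fcong.refl)

lemma cong_nf: "fcong t (nf t)"
proof (induction t)
  case Leaf then show ?case by (simp add: fcong.refl)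
next
  case (Node g a b)
  then show ?case using fcong.trans[OF cong_node[OF Node.IH] cong_join] by simp
qed

lemma reach_SB: "NF t \<Longrightarrow> \<not> isR t \<Longrightarrow> (s, s + farity t - 1) \<in> (A t s)\<^sup>*"
proof (induction t arbitrary: s)
  case Leaf then show ?case by simp
next
  case (Node g a b)
  then have g: "g = GP" by (cases g) auto
  have "(s + farity a, s + farity a + farity b - 1) \<in> (A b (s + farity a))\<^sup>*"
    using Node.IH(2)[of "s + farity a"] Node.prems by simp
  moreover have "A b (s + farity a) \<subseteq> A (Node g a b) s" using g by auto
  ultimately have 1: "(s + farity a, s + farity a + farity b - 1) \<in> (A (Node g a b) s)\<^sup>*"
    using rtrancl_mono by blast
  have 2: "(s, s + farity a) \<in> A (Node g a b) s" using g by simp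
  show ?case using converse_rtrancl_into_rtrancl[OF 2 1] by (simp add: add.assoc)
qed

lemma noreach: assumes "\<forall>(x,y)\<in>X. x < c \<longrightarrow> y < c" "(v,w) \<in> X\<^sup>*" "v < (c::nat)" shows "w < c"
  using assms(2,3)
proof (induction rule: rtrancl_induct)
  case base then show ?case .
next
  case (step y z) then show ?case using assms(1) by auto
qed

lemma R_noreach: "(v,w) \<in> (A (Node GR a b) s)\<^sup>* \<Longrightarrow> v < s + farity a \<Longrightarrow> w < s + farity a"
  apply (erule noreach[rotated])
   apply assumption
  using A_bounds[of _ _ a s] A_bounds[of _ _ b "s + farity a"] by fastforce

lemma A_split_l: "A a s = {(x,y) \<in> A (Node g a b) s. y < s + farity a}"
  using A_bounds[of _ _ a s] A_bounds[of _ _ b "s + farity a"] by (cases g) fastforce+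

lemma A_split_r: "A b (s + farity a) = {(x,y) \<in> A (Node g a b) s. s + farity a \<le> x}"
  using A_bounds[of _ _ a s] A_bounds[of _ _ b "s + farity a"] farity_pos[of a] by (cases g) fastforce+

lemma start_arc: "(s,y) \<in> A (Node g a b) s \<Longrightarrow> y \<le> s + farity a"
  using A_bounds[of _ _ a s] A_bounds[of _ _ b "s + farity a"] farity_pos[of a] by (cases g) fastforce+

lemma R_split: assumes "NF (Node GR a b)" "A (Node GR a b) s = A (Node GR a' b') s"
  "farity (Node GR a b) = farity (Node GR a' b')"
  shows "farity a' \<le> farity a"
proof (rule ccontr)
  assume c: "\<not> farity a' \<le> farity a"
  have "(s + farity a, s + farity a + farity b - 1) \<in> (A b (s + farity a))\<^sup>*"
    using reach_SB[of b "s + farity a"] assms(1) by simp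
  moreover have "A b (s + farity a) \<subseteq> A (Node GR a' b') s" using assms(2) by auto
  ultimately have "(s + farity a, s + farity a + farity b - 1) \<in> (A (Node GR a' b') s)\<^sup>*"
    using rtrancl_mono by blast
  then have "s + farity a + farity b - 1 < s + farity a'" using R_noreach c by simp
  then show False using assms(3) farity_pos[of b'] by simp
qed

lemma P_split: assumes "A (Node GP a b) s = A (Node GP a' b') s"
  shows "farity a \<le> farity a'"
proof -
  have "(s, s + farity a) \<in> A (Node GP a' b') s" using assms[symmetric] by simp
  then show ?thesis using start_arc by fastforce
qed

lemma inj_NF: "NF t \<Longrightarrow> NF t' \<Longrightarrow> farity t = farity t' \<Longrightarrow> A t s = A t' s \<Longrightarrow> t = t'"
proof (induction t arbitrary: t' s)
  case Leaf then show ?case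
  proof (cases t')
    case (Node g a b) then show ?thesis using Leaf farity_pos[of a] farity_pos[of b] by simp
  qed simp
next
  case (Node g a b)
  show ?case
  proof (cases t')
    case Leaf then show ?thesis using Node.prems farity_pos[of a] farity_pos[of b] by simp
  next
    case (Node g' a' b')
    have gg: "g = g'"
    proof (rule ccontr)
      assume ne: "g \<noteq> g'"
      { fix g a b g' a' b' assume h: "NF (Node g a b)" "NF (Node g' a' b')" "farity (Node g a b) = farity (Node g' a' b')"
          "A (Node g a b) s = A (Node g' a' b') s" "g = GP" "g' = GR"
        have "(s, s + farity (Node g a b) - 1) \<in> (A (Node g' a' b') s)\<^sup>*"
          using reach_SB[of "Node g a b" s] h by simp
        then have "s + farity (Node g a b) - 1 < s + farity a'" using R_noreach h farity_pos[of a'] by simp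
        then have False using h(3) farity_pos[of b'] by simp }
      then show False using ne Node.prems \<open>t' = _\<close>
        by (cases g; cases g') metis+
    qed
    have aa: "farity a = farity a'"
    proof (cases g)
      case GP then show ?thesis using P_split Node.prems \<open>t' = _\<close> gg by (metis le_antisym)
    next
      case GR then show ?thesis using R_split Node.prems \<open>t' = _\<close> gg by (metis le_antisym)
    qed
    have "A a s = A a' s" using A_split_l[of a s g b] A_split_l[of a' s g' b'] Node.prems \<open>t' = _\<close> aa by simp
    then have "a = a'" using Node.IH(1) Node.prems \<open>t' = _\<close> aa by simp
    have "A b (s + farity a) = A b' (s + farity a)"
      using A_split_r[of b s a g] A_split_r[of b' s a' g'] Node.prems \<open>t' = _\<close> aa by simp
    then have "b = b'" using Node.IH(2) Node.prems \<open>t' = _\<close> aa by simp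
    show ?thesis using \<open>a = a'\<close> \<open>b = b'\<close> gg \<open>t' = _\<close> by simp
  qed
qed

lemma F_inj: "F x = F y \<Longrightarrow> farity x = farity y \<and> A x 1 = A y 1"
proof -
  assume h: "F x = F y"
  then have n: "farity x = farity y" by (simp add: F_def)
  have "(1, farity x + 1) \<notin> A x 1" "(1, farity x + 1) \<notin> A y 1"
    using A_bounds[of 1 "farity x + 1" x 1] A_bounds[of 1 "farity x + 1" y 1] n by auto
  moreover have "insert (1, farity x + 1) (A x 1) = insert (1, farity x + 1) (A y 1)"
    using h n by (simp add: F_def)
  ultimately show ?thesis using n by (metis insert_ident)
qed

theorem theorem3p24:
  shows "range feval = suboperad_gen {T_bbu, T_ubu}
         \<and> (\<forall>t t'. feval t = feval t' \<longleftrightarrow> fcong t t')"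
proof (intro conjI allI iffI)
  show "range feval = suboperad_gen {T_bbu, T_ubu}" by (rule range_part)
next
  fix t t' assume "fcong t t'" then show "feval t = feval t'" by (simp add: feval_F fcong_F)
next
  fix t t' assume h: "feval t = feval t'"
  have "F (nf t) = F (nf t')"
    using h fcong_F[OF cong_nf[of t]] fcong_F[OF cong_nf[of t']] by (simp add: feval_F)
  then have "nf t = nf t'" using F_inj inj_NF NF_nf by blast
  then show "fcong t t'"
    by (metis fcong.trans fcong.sym cong_nf)
qed

end
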